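(* Consider the Cucker–Smale model with bonding force $$\dot{\mathbf{x}}_i=\mathbf{v}_i,\qquad \dot{\mathbf{v}}_i=\frac{\kappa_0}{N}\sum_{j=1}^N\psi(\|\mathbf{x}_j-\mathbf{x}_i\|)(\mathbf{v}_j-\mathbf{v}_i)+\frac{\kappa_1}{N}\sum_{j\ne i}\Big\langle\mathbf{v}_j-\mathbf{v}_i,\frac{\mathbf{x}_j-\mathbf{x}_i}{\|\mathbf{x}_j-\mathbf{x}_i\|}\Big\rangle\frac{\mathbf{x}_j-\mathbf{x}_i}{\|\mathbf{x}_j-\mathbf{x}_i\|}+\frac{\kappa_2}{N}\sum_{j\ne i}\big(\|\mathbf{x}_j-\mathbf{x}_i\|-d^\infty_{ij}\big)\frac{\mathbf{x}_j-\mathbf{x}_i}{\|\mathbf{x}_j-\mathbf{x}_i\|}.$$ Suppose $$\min_{i\ne j}\|\mathbf{x}_i^0-\mathbf{x}_j^0\|>0,\quad \min_{i\ne j}d^\infty_{ij}>\sqrt{\frac{2NE(0)}{\kappa_2}},\quad (X^0,V^0)\in S,\quad \kappa_0>0,\ \kappa_1>0,\ \kappa_2>0,$$ and let $\{(\mathbf{x}_i,\mathbf{v}_i)\}$ be a global smooth solution. Then: (i) $\sup_{0\le t<\infty}\max_{i,j}\|\mathbf{x}_i(t)-\mathbf{x}_j(t)\|<\infty$ and $\lim_{t\to\infty}\max_{i,j}\|\mathbf{v}_j(t)-\mathbf{v}_i(t)\|=0$; (ii) if $\sum_{i=1}^N\mathbf{v}_i^0=0$, then $\lim_{t\to\infty}\max_{1\le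 i\le N}\|\mathbf{v}_i(t)\|=0$.
   Context: $N\ge2$, $d\ge1$, Euclidean norm and inner product on $\mathbb{R}^d$; $[d^\infty_{ij}]$ real symmetric with zero diagonal; $(X^0,V^0)=(\mathbf{x}_i(0),\mathbf{v}_i(0))_i$. $E:=\frac12\sum_i\|\mathbf{v}_i\|^2+\frac{\kappa_2}{4N}\sum_{i,j}(\|\mathbf{x}_j-\mathbf{x}_i\|-d^\infty_{ij})^2$. $U:=\max_{i\ne j}d^\infty_{ij}+\sqrt{2NE(0)/\kappa_2}$, $S:=\{(X,V)\in\mathbb{R}^{2dN}:\max_{i\ne j}\|\mathbf{x}_i-\mathbf{x}_j\|\le U\}$. The weight $\psi:[0,\infty)\to[0,\infty)$ is locally Lipschitz with $0\le\psi(r)\le\psi_M$ for all $r\ge0$ and $\psi_m:=\min_{r\in[0,U]}\psi(r)>0$. A global smooth solution is a $C^1$ solution on $[0,\infty)$ with $\mathbf{x}_i(t)\ne\mathbf{x}_j(t)$ for $i\ne j$. *)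

theory Defs
  imports "HOL-Analysis.Analysis"
begin

text \<open>Unit direction from x_i to x_j (only used for i \<noteq> j, where positions differ).\<close>
definition unitdir :: "'a::euclidean_space \<Rightarrow> 'a \<Rightarrow> 'a" where
  "unitdir xi xj = (1 / norm (xj - xi)) *\<^sub>R (xj - xi)"

text \<open>Right-hand side of the velocity equation for agent i. Agents are indexed by 0..N-1.\<close>
definition CS_force ::
  "nat \<Rightarrow> real \<Rightarrow> real \<Rightarrow> real \<Rightarrow> (real \<Rightarrow> real) \<Rightarrow> (nat \<Rightarrow> nat \<Rightarrow> real)
   \<Rightarrow> (nat \<Rightarrow> 'a::euclidean_space) \<Rightarrow> (nat \<Rightarrow> 'a) \<Rightarrow> nat \<Rightarrow> 'a" where
  "CS_force N k0 k1 k2 \<psi> dinf X V i =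
     (k0 / real N) *\<^sub>R (\<Sum>j<N. \<psi> (norm (X j - X i)) *\<^sub>R (V j - V i))
   + (k1 / real N) *\<^sub>R (\<Sum>j\<in>{..<N} - {i}.
        ((V j - V i) \<bullet> unitdir (X i) (X j)) *\<^sub>R unitdir (X i) (X j))
   + (k2 / real N) *\<^sub>R (\<Sum>j\<in>{..<N} - {i}.
        (norm (X j - X i) - dinf i j) *\<^sub>R unitdir (X i) (X j))"

definition CS_energy ::
  "nat \<Rightarrow> real \<Rightarrow> (nat \<Rightarrow> nat \<Rightarrow> real) \<Rightarrow> (nat \<Rightarrow> 'a::euclidean_space) \<Rightarrow> (nat \<Rightarrow> 'a) \<Rightarrow> real" where
  "CS_energy N k2 dinf X V =
     (1/2) * (\<Sum>i<N. (norm (V i))\<^sup>2)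
   + (k2 / (4 * real N)) * (\<Sum>i<N. \<Sum>j<N. (norm (X j - X i) - dinf i j)\<^sup>2)"

definition CS_global_smooth_solution ::
  "nat \<Rightarrow> real \<Rightarrow> real \<Rightarrow> real \<Rightarrow> (real \<Rightarrow> real) \<Rightarrow> (nat \<Rightarrow> nat \<Rightarrow> real)
   \<Rightarrow> (nat \<Rightarrow> real \<Rightarrow> 'a::euclidean_space) \<Rightarrow> (nat \<Rightarrow> real \<Rightarrow> 'a) \<Rightarrow> bool" where
  "CS_global_smooth_solution N k0 k1 k2 \<psi> dinf x v \<longleftrightarrow>
     (\<forall>i<N. \<forall>t\<ge>0.
        (x i has_vector_derivative v i t) (at t within {0..}) \<and>
        (v i has_vector_derivative
           CS_force N k0 k1 k2 \<psi> dinf (\<lambda>j. x j t) (\<lambda>j. v j t) i) (at t within {0..})) \<and>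
     (\<forall>i<N. continuous_on {0..} (v i) \<and>
        continuous_on {0..} (\<lambda>t. CS_force N k0 k1 k2 \<psi> dinf (\<lambda>j. x j t) (\<lambda>j. v j t) i)) \<and>
     (\<forall>t\<ge>0. \<forall>i<N. \<forall>j<N. i \<noteq> j \<longrightarrow> x i t \<noteq> x j t)"

definition locally_lipschitz_nonneg :: "(real \<Rightarrow> real) \<Rightarrow> bool" where
  "locally_lipschitz_nonneg f \<longleftrightarrow>
     (\<forall>r\<ge>0. \<exists>\<delta>>0. \<exists>L. \<forall>a\<in>{0..} \<inter> cball r \<delta>. \<forall>b\<in>{0..} \<inter> cball r \<delta>.
        \<bar>f a - f b\<bar> \<le> L * \<bar>a - b\<bar>)"

end

theory Submission
  imports Defs
begin


lemma unitdir_swap: "unitdir b a = - unitdir a b"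
  unfolding unitdir_def by (simp add: norm_minus_commute scaleR_diff_right)

lemma unitdir_same: "unitdir a a = 0"
  unfolding unitdir_def by simp

lemma norm_unitdir_le: "norm (unitdir a b) \<le> 1"
  unfolding unitdir_def by (cases "a = b") auto

lemma unitdir_sgn: "unitdir a b = sgn (b - a)"
  unfolding unitdir_def sgn_div_norm by (simp add: divide_inverse_commute)

definition Wf :: "nat \<Rightarrow> real \<Rightarrow> real \<Rightarrow> real \<Rightarrow> (real \<Rightarrow> real) \<Rightarrow> (nat \<Rightarrow> nat \<Rightarrow> real)
   \<Rightarrow> (nat \<Rightarrow> 'a::euclidean_space) \<Rightarrow> (nat \<Rightarrow> 'a) \<Rightarrow> nat \<Rightarrow> nat \<Rightarrow> 'a" where
  "Wf N k0 k1 k2 \<psi> dinf X V i j =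
     (k0 / real N) *\<^sub>R (\<psi> (norm (X j - X i)) *\<^sub>R (V j - V i))
   + (k1 / real N) *\<^sub>R (((V j - V i) \<bullet> unitdir (X i) (X j)) *\<^sub>R unitdir (X i) (X j))
   + (k2 / real N) *\<^sub>R ((norm (X j - X i) - dinf i j) *\<^sub>R unitdir (X i) (X j))"

lemma sum_drop_i:
  fixes N i :: nat
  assumes "i < N" "g i = 0"
  shows "(\<Sum>j\<in>{..<N} - {i}. g j) = (\<Sum>j<N. g j)"
proof -
  have f: "finite {..<N}" by simp
  have "sum g {..<N} = g i + sum g ({..<N} - {i})" using sum.remove[OF f, of i g] assms by simp
  with assms show ?thesis by simp
qed

lemma force_eq:
  assumes "i < N"
  shows "CS_force N k0 k1 k2 \<psi> dinf X V i = (\<Sum>j<N. Wf N k0 k1 k2 \<psi> dinf X V i j)"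
proof -
  have a: "(\<Sum>j\<in>{..<N} - {i}. ((V j - V i) \<bullet> unitdir (X i) (X j)) *\<^sub>R unitdir (X i) (X j))
     = (\<Sum>j<N. ((V j - V i) \<bullet> unitdir (X i) (X j)) *\<^sub>R unitdir (X i) (X j))"
    by (rule sum_drop_i) (use assms in \<open>auto simp: unitdir_same\<close>)
  have b: "(\<Sum>j\<in>{..<N} - {i}. (norm (X j - X i) - dinf i j) *\<^sub>R unitdir (X i) (X j))
     = (\<Sum>j<N. (norm (X j - X i) - dinf i j) *\<^sub>R unitdir (X i) (X j))"
    by (rule sum_drop_i) (use assms in \<open>auto simp: unitdir_same\<close>)
  show ?thesis
    unfolding CS_force_def Wf_def a b
    by (simp add: sum.distrib scaleR_sum_right)
qed

lemma Wf_antisym: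
  assumes "dinf i j = dinf j i"
  shows "Wf N k0 k1 k2 \<psi> dinf X V j i = - Wf N k0 k1 k2 \<psi> dinf X V i j"
proof -
  have "norm (X i - X j) = norm (X j - X i)" by (rule norm_minus_commute)
  moreover have "V i - V j = - (V j - V i)" by simp
  ultimately show ?thesis unfolding Wf_def unitdir_swap[of "X i" "X j"] assms
    by (simp add: algebra_simps)
qed

lemma antisym_sum_zero:
  fixes w :: "nat \<Rightarrow> nat \<Rightarrow> 'a::real_vector"
  assumes "finite A" "\<And>i j. i \<in> A \<Longrightarrow> j \<in> A \<Longrightarrow> w j i = - w i j"
  shows "(\<Sum>i\<in>A. \<Sum>j\<in>A. w i j) = 0"
proof -
  have "(\<Sum>i\<in>A. \<Sum>j\<in>A. w i j) = (\<Sum>j\<in>A. \<Sum>i\<in>A. w i j)" by (rule sum.swap)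
  also have "\<dots> = (\<Sum>j\<in>A. \<Sum>i\<in>A. - w j i)"
    by (intro sum.cong refl) (metis assms(2))
  also have "\<dots> = - (\<Sum>j\<in>A. \<Sum>i\<in>A. w j i)" by (simp add: sum_negf)
  finally have h: "(\<Sum>i\<in>A. \<Sum>j\<in>A. w i j) = - (\<Sum>i\<in>A. \<Sum>j\<in>A. w i j)" by simp
  have "(\<Sum>i\<in>A. \<Sum>j\<in>A. w i j) + (\<Sum>i\<in>A. \<Sum>j\<in>A. w i j) = 0"
    by (metis h add.left_inverse)
  then have "2 *\<^sub>R (\<Sum>i\<in>A. \<Sum>j\<in>A. w i j) = 0" by (simp add: scaleR_2)
  then show ?thesis by simp
qed

lemma antisym_inner_sum:
  fixes w :: "nat \<Rightarrow> nat \<Rightarrow> 'a::real_inner"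
  assumes "finite A" "\<And>i j. i \<in> A \<Longrightarrow> j \<in> A \<Longrightarrow> w j i = - w i j"
  shows "(\<Sum>i\<in>A. V i \<bullet> (\<Sum>j\<in>A. w i j)) = -(1/2) * (\<Sum>i\<in>A. \<Sum>j\<in>A. (V j - V i) \<bullet> w i j)"
proof -
  define S1 where "S1 = (\<Sum>i\<in>A. \<Sum>j\<in>A. V i \<bullet> w i j)"
  have l: "(\<Sum>i\<in>A. V i \<bullet> (\<Sum>j\<in>A. w i j)) = S1"
    unfolding S1_def by (simp add: inner_sum_right)
  have "S1 = (\<Sum>j\<in>A. \<Sum>i\<in>A. V i \<bullet> w i j)" unfolding S1_def by (rule sum.swap)
  also have "\<dots> = (\<Sum>j\<in>A. \<Sum>i\<in>A. - (V i \<bullet> w j i))"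
    by (intro sum.cong refl) (metis assms(2) inner_minus_right)
  finally have s2: "S1 = - (\<Sum>i\<in>A. \<Sum>j\<in>A. V j \<bullet> w i j)"
    by (simp add: sum_negf)
  have "(\<Sum>i\<in>A. \<Sum>j\<in>A. (V j - V i) \<bullet> w i j)
      = (\<Sum>i\<in>A. \<Sum>j\<in>A. V j \<bullet> w i j) - S1"
    unfolding S1_def by (simp add: inner_diff_left sum_subtractf)
  then show ?thesis using l s2 by simp
qed

lemma inner_Wf:
  "(V j - V i) \<bullet> Wf N k0 k1 k2 \<psi> dinf X V i j =
     (k0 / real N) * (\<psi> (norm (X j - X i)) * (norm (V j - V i))^2)
   + (k1 / real N) * ((V j - V i) \<bullet> unitdir (X i) (X j))^2
   + (k2 / real N) * ((norm (X j - X i) - dinf i j) * ((V j - V i) \<bullet> unitdir (X i) (X j)))"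
proof -
  have n: "(V j - V i) \<bullet> (V j - V i) = norm (V j - V i) * norm (V j - V i)"
    by (metis dot_square_norm power2_eq_square)
  show ?thesis unfolding Wf_def power2_eq_square by (simp add: inner_add_right n mult.assoc)
qed

lemma energy_deriv_formula:
  fixes X V :: "nat \<Rightarrow> 'a::euclidean_space"
  assumes dsym: "\<forall>i<N. \<forall>j<N. dinf i j = dinf j i" and Npos: "N > 0"
  shows "(\<Sum>i<N. V i \<bullet> CS_force N k0 k1 k2 \<psi> dinf X V i)
     + (k2 / (4 * real N)) * (\<Sum>i<N. \<Sum>j<N. 2 * (norm (X j - X i) - dinf i j) * ((V j - V i) \<bullet> unitdir (X i) (X j)))
   = -(1 / (2 * real N)) * (\<Sum>i<N. \<Sum>j<N. k0 * \<psi> (norm (X j - X i)) * (norm (V j - V i))^2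
          + k1 * ((V j - V i) \<bullet> unitdir (X i) (X j))^2)"
proof -
  let ?W = "Wf N k0 k1 k2 \<psi> dinf X V"
  let ?a = "\<lambda>i j. \<psi> (norm (X j - X i)) * (norm (V j - V i))^2"
  let ?b = "\<lambda>i j. ((V j - V i) \<bullet> unitdir (X i) (X j))^2"
  let ?c = "\<lambda>i j. (norm (X j - X i) - dinf i j) * ((V j - V i) \<bullet> unitdir (X i) (X j))"
  have "(\<Sum>i<N. V i \<bullet> CS_force N k0 k1 k2 \<psi> dinf X V i) = (\<Sum>i<N. V i \<bullet> (\<Sum>j<N. ?W i j))"
    by (intro sum.cong refl) (simp add: force_eq)
  also have "\<dots> = -(1/2) * (\<Sum>i<N. \<Sum>j<N. (V j - V i) \<bullet> ?W i j)"
    by (rule antisym_inner_sum) (use dsym in \<open>auto intro!: Wf_antisym\<close>)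
  also have "(\<Sum>i<N. \<Sum>j<N. (V j - V i) \<bullet> ?W i j) =
     (k0 / real N) * (\<Sum>i<N. \<Sum>j<N. ?a i j) + (k1 / real N) * (\<Sum>i<N. \<Sum>j<N. ?b i j)
     + (k2 / real N) * (\<Sum>i<N. \<Sum>j<N. ?c i j)"
    unfolding inner_Wf by (simp add: sum.distrib sum_distrib_left)
  finally have 1: "(\<Sum>i<N. V i \<bullet> CS_force N k0 k1 k2 \<psi> dinf X V i) = 
     -(1/2) * ((k0 / real N) * (\<Sum>i<N. \<Sum>j<N. ?a i j) + (k1 / real N) * (\<Sum>i<N. \<Sum>j<N. ?b i j)
     + (k2 / real N) * (\<Sum>i<N. \<Sum>j<N. ?c i j))" .
  have 2: "(\<Sum>i<N. \<Sum>j<N. 2 * (norm (X j - X i) - dinf i j) * ((V j - V i) \<bullet> unitdir (X i) (X j)))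
     = 2 * (\<Sum>i<N. \<Sum>j<N. ?c i j)"
    unfolding sum_distrib_left by (intro sum.cong refl) (simp add: algebra_simps)
  have 3: "(\<Sum>i<N. \<Sum>j<N. k0 * \<psi> (norm (X j - X i)) * (norm (V j - V i))^2
          + k1 * ((V j - V i) \<bullet> unitdir (X i) (X j))^2) = k0 * (\<Sum>i<N. \<Sum>j<N. ?a i j) + k1 * (\<Sum>i<N. \<Sum>j<N. ?b i j)"
    by (simp add: sum.distrib sum_distrib_left mult.assoc)
  show ?thesis
    unfolding 1 2 3 using Npos by (simp add: field_simps)
qed

lemma antisym_force_sum:
  assumes dsym: "\<forall>i<N. \<forall>j<N. dinf i j = dinf j i"
  shows "(\<Sum>i<N. CS_force N k0 k1 k2 \<psi> dinf X V i) = 0"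
proof -
  have "(\<Sum>i<N. CS_force N k0 k1 k2 \<psi> dinf X V i) = (\<Sum>i<N. \<Sum>j<N. Wf N k0 k1 k2 \<psi> dinf X V i j)"
    by (intro sum.cong refl) (simp add: force_eq)
  also have "\<dots> = 0"
    by (rule antisym_sum_zero) (use dsym in \<open>auto intro!: Wf_antisym\<close>)
  finally show ?thesis .
qed



lemma normder:
  fixes f :: "real \<Rightarrow> 'a::euclidean_space"
  assumes "(f has_vector_derivative f') (at t within S)" "f t \<noteq> 0"
  shows "((\<lambda>t. norm (f t)) has_real_derivative (f' \<bullet> sgn (f t))) (at t within S)"
proof -
  have "(norm has_derivative (\<lambda>h. h \<bullet> sgn (f t))) (at (f t))"
    using has_derivative_norm[OF assms(2)] .
  from has_derivative_compose[OF assms(1)[unfolded has_vector_derivative_def] this]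
  have "((\<lambda>t. norm (f t)) has_derivative (\<lambda>x. x * (f' \<bullet> sgn (f t)))) (at t within S)"
    by (simp add: o_def inner_scaleR_left)
  moreover have "(\<lambda>x. x * (f' \<bullet> sgn (f t))) = (*) (f' \<bullet> sgn (f t))" by (auto simp: fun_eq_iff)
  ultimately show ?thesis unfolding has_field_derivative_def by simp
qed

lemma sqder:
  fixes f :: "real \<Rightarrow> 'a::euclidean_space"
  assumes "(f has_vector_derivative f') (at t within S)"
  shows "((\<lambda>t. (norm (f t))^2) has_real_derivative (2 * (f t \<bullet> f'))) (at t within S)"
proof -
  from has_derivative_inner[OF assms[unfolded has_vector_derivative_def] assms[unfolded has_vector_derivative_def]]
  have "((\<lambda>t. f t \<bullet> f t) has_derivative (\<lambda>h. f t \<bullet> (h *\<^sub>R f') + (h *\<^sub>R f') \<bullet> f t)) (at t within S)" .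
  moreover have "(\<lambda>h. f t \<bullet> (h *\<^sub>R f') + (h *\<^sub>R f') \<bullet> f t) = (*) (2 * (f t \<bullet> f'))"
    by (auto simp: fun_eq_iff inner_commute)
  ultimately show ?thesis unfolding has_field_derivative_def power2_norm_eq_inner by simp
qed

lemma mono_within:
  fixes f f' :: "real \<Rightarrow> real"
  assumes "0 \<le> a" "a \<le> b"
    and d: "\<And>s. a \<le> s \<Longrightarrow> s \<le> b \<Longrightarrow> (f has_real_derivative f' s) (at s within {0..}) \<and> f' s \<le> 0"
  shows "f b \<le> f a"
proof (rule DERIV_nonpos_imp_decreasing_open[OF assms(2)])
  fix s assume s: "a < s" "s < b"
  then have "at s within {0..} = at s" by (intro at_within_interior) (use assms(1) in auto)
  then show "\<exists>y. DERIV f s :> y \<and> y \<le> 0" using d[of s] s by auto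
next
  have "continuous (at s within {a..b}) f" if "s \<in> {a..b}" for s
  proof -
    have "continuous (at s within {0..}) f" using d[of s] that DERIV_continuous by auto
    then show ?thesis by (rule continuous_within_subset) (use assms(1) in auto)
  qed
  then show "continuous_on {a..b} f" using continuous_on_eq_continuous_within by blast
qed

lemma lip_within:
  fixes g g' :: "real \<Rightarrow> 'a::euclidean_space"
  assumes "0 \<le> a" "a \<le> b"
    and d: "\<And>s. a \<le> s \<Longrightarrow> s \<le> b \<Longrightarrow> (g has_vector_derivative g' s) (at s within {0..}) \<and> norm (g' s) \<le> B"
  shows "norm (g b - g a) \<le> B * (b - a)"
proof -
  have "norm (g b - g a) \<le> B * norm (b - a)"
  proof (rule differentiable_bound[where f' = "\<lambda>s h. h *\<^sub>R g' s"])
    show "convex {a..b}" by simp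
    fix s assume s: "s \<in> {a..b}"
    have "(g has_vector_derivative g' s) (at s within {a..b})"
      by (rule has_vector_derivative_within_subset[of _ _ _ "{0..}"]) (use d[of s] s assms(1) in auto)
    then show "(g has_derivative (\<lambda>h. h *\<^sub>R g' s)) (at s within {a..b})"
      unfolding has_vector_derivative_def .
    have "onorm (\<lambda>h::real. h *\<^sub>R g' s) = onorm (\<lambda>h::real. h) * norm (g' s)"
      by (rule onorm_scaleR_left) (rule bounded_linear_ident)
    then show "onorm (\<lambda>h::real. h *\<^sub>R g' s) \<le> B" using d[of s] s by (simp add: onorm_id)
  qed (use assms in auto)
  then show ?thesis using assms by simp
qed

lemma dsum_single:
  fixes a :: "nat \<Rightarrow> nat \<Rightarrow> real"
  assumes "\<And>i j. i < N \<Longrightarrow> j < N \<Longrightarrow> 0 \<le> a i j" "i < N" "j < N"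
  shows "a i j \<le> (\<Sum>i<N. \<Sum>j<N. a i j)"
proof -
  have "a i j \<le> (\<Sum>j<N. a i j)" by (rule member_le_sum) (use assms in auto)
  also have "\<dots> \<le> (\<Sum>i<N. \<Sum>j<N. a i j)"
    by (rule member_le_sum[of _ _ "\<lambda>i. \<Sum>j<N. a i j"]) (use assms in \<open>auto intro!: sum_nonneg\<close>)
  finally show ?thesis .
qed

lemma dsum_pair:
  fixes a :: "nat \<Rightarrow> nat \<Rightarrow> real"
  assumes "\<And>i j. i < N \<Longrightarrow> j < N \<Longrightarrow> 0 \<le> a i j" "i < N" "j < N" "i \<noteq> j"
  shows "a i j + a j i \<le> (\<Sum>i<N. \<Sum>j<N. a i j)"
proof -
  have "(\<Sum>i<N. \<Sum>j<N. a i j) = (\<Sum>(i,j)\<in>{..<N}\<times>{..<N}. a i j)"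
    by (rule sum.cartesian_product)
  moreover have "(\<Sum>(i,j)\<in>{(i,j),(j,i)}. a i j) \<le> (\<Sum>(i,j)\<in>{..<N}\<times>{..<N}. a i j)"
    by (rule sum_mono2) (use assms in auto)
  moreover have "(\<Sum>(i,j)\<in>{(i,j),(j,i)}. a i j) = a i j + a j i" using assms(4) by simp
  ultimately show ?thesis by simp
qed

lemma finite_pairs: "finite {f i j | i j. i < (N::nat) \<and> j < N \<and> P i j}"
  by (rule finite_subset[of _ "(\<lambda>(i,j). f i j) ` ({..<N}\<times>{..<N})"]) auto

lemma finite_pairs2: "finite {f i j | i j. i < (N::nat) \<and> j < N}"
  by (rule finite_subset[of _ "(\<lambda>(i,j). f i j) ` ({..<N}\<times>{..<N})"]) auto

lemma Wf_bound:
  assumes V: "\<forall>j<N. norm (V j) \<le> Vb" and R: "\<forall>j<N. \<bar>norm (X j - X i) - dinf i j\<bar> \<le> Rb"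
    and psi: "\<forall>r\<ge>0. 0 \<le> \<psi> r \<and> \<psi> r \<le> \<psi>M"
    and k: "k0 \<ge> 0" "k1 \<ge> 0" "k2 \<ge> 0" and ij: "i < N" "j < N"
  shows "norm (Wf N k0 k1 k2 \<psi> dinf X V i j) \<le> (k0 / real N) * (\<psi>M * (2 * Vb)) + (k1 / real N) * (2 * Vb) + (k2 / real N) * Rb"
proof -
  let ?e = "unitdir (X i) (X j)"
  have nv: "norm (V j - V i) \<le> 2 * Vb"
  proof -
    have "norm (V j) \<le> Vb" "norm (V i) \<le> Vb" using V ij by auto
    then show ?thesis using norm_triangle_ineq4[of "V j" "V i"] by linarith
  qed
  have p: "0 \<le> \<psi> (norm (X j - X i))" "\<psi> (norm (X j - X i)) \<le> \<psi>M" using psi by auto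
  have ne: "norm ?e \<le> 1" by (rule norm_unitdir_le)
  have t1: "norm ((k0 / real N) *\<^sub>R (\<psi> (norm (X j - X i)) *\<^sub>R (V j - V i))) \<le> (k0 / real N) * (\<psi>M * (2 * Vb))"
  proof -
    have "\<psi> (norm (X j - X i)) * norm (V j - V i) \<le> \<psi>M * (2*Vb)"
      by (rule mult_mono) (use p nv in auto)
    then have "(k0/real N) * (\<psi> (norm (X j - X i)) * norm (V j - V i)) \<le> (k0/real N) * (\<psi>M * (2*Vb))"
      by (rule mult_left_mono) (use k in simp)
    then show ?thesis using p k by (simp add: abs_of_nonneg)
  qed
  have "\<bar>(V j - V i) \<bullet> ?e\<bar> * norm ?e \<le> norm (V j - V i)"
  proof -
    have "\<bar>(V j - V i) \<bullet> ?e\<bar> \<le> norm (V j - V i) * norm ?e" by (rule Cauchy_Schwarz_ineq2)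
    also have "\<dots> \<le> norm (V j - V i)" using ne by (simp add: mult_left_le)
    finally show ?thesis using ne by (meson abs_ge_zero mult_left_le order_trans)
  qed
  then have "\<bar>(V j - V i) \<bullet> ?e\<bar> * norm ?e \<le> 2 * Vb" using nv by linarith
  then have h: "(k1 / real N) * (\<bar>(V j - V i) \<bullet> ?e\<bar> * norm ?e) \<le> (k1 / real N) * (2 * Vb)"
    by (rule mult_left_mono) (use k in simp)
  have "norm ((k1 / real N) *\<^sub>R (((V j - V i) \<bullet> ?e) *\<^sub>R ?e)) = \<bar>k1 / real N\<bar> * (\<bar>(V j - V i) \<bullet> ?e\<bar> * norm ?e)"
    by (simp only: norm_scaleR)
  also have "\<bar>k1 / real N\<bar> = k1 / real N" using k by simp
  finally have eq: "norm ((k1 / real N) *\<^sub>R (((V j - V i) \<bullet> ?e) *\<^sub>R ?e)) = (k1 / real N) * (\<bar>(V j - V i) \<bullet> ?e\<bar> * norm ?e)" .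
  with h have t2: "norm ((k1 / real N) *\<^sub>R (((V j - V i) \<bullet> ?e) *\<^sub>R ?e)) \<le> (k1 / real N) * (2 * Vb)"
    by linarith
  have t3: "norm ((k2 / real N) *\<^sub>R ((norm (X j - X i) - dinf i j) *\<^sub>R ?e)) \<le> (k2 / real N) * Rb"
  proof -
    have "\<bar>norm (X j - X i) - dinf i j\<bar> * norm ?e \<le> Rb" using R ij ne
      by (meson abs_ge_zero mult_left_le order_trans)
    then have h: "(k2 / real N) * (\<bar>norm (X j - X i) - dinf i j\<bar> * norm ?e) \<le> (k2 / real N) * Rb"
      by (rule mult_left_mono) (use k in simp)
    have "norm ((k2 / real N) *\<^sub>R ((norm (X j - X i) - dinf i j) *\<^sub>R ?e)) = \<bar>k2 / real N\<bar> * (\<bar>norm (X j - X i) - dinf i j\<bar> * norm ?e)"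
      by (simp only: norm_scaleR)
    also have "\<bar>k2 / real N\<bar> = k2 / real N" using k by simp
    finally show ?thesis using h by linarith
  qed
  show ?thesis unfolding Wf_def
    by (rule order_trans[OF norm_triangle_ineq add_mono[OF order_trans[OF norm_triangle_ineq add_mono[OF t1 t2]] t3]])
qed

lemma tendsto_Max0:
  fixes A :: "real \<Rightarrow> real set"
  assumes "\<And>t. finite (A t)" "\<And>t. A t \<noteq> {}" "\<And>t y. y \<in> A t \<Longrightarrow> 0 \<le> y"
    and "\<And>\<epsilon>. \<epsilon> > 0 \<Longrightarrow> \<exists>T. \<forall>t\<ge>T. \<forall>y\<in>A t. y < \<epsilon>"
  shows "((\<lambda>t::real. Max (A t)) \<longlongrightarrow> 0) at_top"
proof (rule tendstoI)
  fix e :: real assume e: "e > 0"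
  then obtain T where T: "\<forall>t\<ge>T. \<forall>y\<in>A t. y < e" using assms(4) by blast
  have "\<bar>Max (A t) - 0\<bar> < e" if "t \<ge> T" for t
  proof -
    obtain y where y: "y \<in> A t" using assms(2) by blast
    have "0 \<le> Max (A t)" using y assms(3)[OF y] Max_ge[OF assms(1) y] by auto
    moreover have "Max (A t) < e" using T that assms(1,2) by (simp add: Max_less_iff)
    ultimately show ?thesis by simp
  qed
  then show "\<forall>\<^sub>F t in at_top. dist (Max (A t)) 0 < e"
    unfolding eventually_at_top_linorder dist_real_def by blast
qed



theorem theorem4p2:
  fixes N :: nat and k0 k1 k2 \<psi>M :: real and \<psi> :: "real \<Rightarrow> real"
    and dinf :: "nat \<Rightarrow> nat \<Rightarrow> real"
    and x v :: "nat \<Rightarrow> real \<Rightarrow> 'a::euclidean_space"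
  defines "E0 \<equiv> CS_energy N k2 dinf (\<lambda>i. x i 0) (\<lambda>i. v i 0)"
  defines "U \<equiv> Max {dinf i j | i j. i < N \<and> j < N \<and> i \<noteq> j} + sqrt (2 * real N * E0 / k2)"
  assumes N2: "N \<ge> 2"
    and dsym: "\<forall>i<N. \<forall>j<N. dinf i j = dinf j i"
    and ddiag: "\<forall>i<N. dinf i i = 0"
    and psi_lip: "locally_lipschitz_nonneg \<psi>"
    and psi_bnd: "\<forall>r\<ge>0. 0 \<le> \<psi> r \<and> \<psi> r \<le> \<psi>M"
    and psi_min: "Inf (\<psi> ` {0..U}) > 0"
    and init_sep: "Min {norm (x i 0 - x j 0) | i j. i < N \<and> j < N \<and> i \<noteq> j} > 0"
    and d_large: "Min {dinf i j | i j. i < N \<and> j < N \<and> i \<noteq> j} > sqrt (2 * real N * E0 / k2)"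
    and init_S: "Max {norm (x i 0 - x j 0) | i j. i < N \<and> j < N \<and> i \<noteq> j} \<le> U"
    and k0: "k0 > 0" and k1: "k1 > 0" and k2: "k2 > 0"
    and sol: "CS_global_smooth_solution N k0 k1 k2 \<psi> dinf x v"
  shows "(\<exists>B. \<forall>t\<ge>0. Max {norm (x i t - x j t) | i j. i < N \<and> j < N} \<le> B)
       \<and> ((\<lambda>t. Max {norm (v j t - v i t) | i j. i < N \<and> j < N}) \<longlongrightarrow> 0) at_top
       \<and> ((\<Sum>i<N. v i 0) = 0 \<longrightarrow>
            ((\<lambda>t. Max {norm (v i t) | i. i < N}) \<longlongrightarrow> 0) at_top)"
proof -
  have Npos: "N > 0" and rNpos: "real N > 0" using N2 by auto
  define F where "F i t = CS_force N k0 k1 k2 \<psi> dinf (\<lambda>j. x j t) (\<lambda>j. v j t) i" for i t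
  define E where "E t = CS_energy N k2 dinf (\<lambda>i. x i t) (\<lambda>i. v i t)" for t
  define D where "D t = -(1 / (2 * real N)) * (\<Sum>i<N. \<Sum>j<N. k0 * \<psi> (norm (x j t - x i t)) * (norm (v j t - v i t))^2
          + k1 * ((v j t - v i t) \<bullet> unitdir (x i t) (x j t))^2)" for t
  have xder: "\<And>i t. i < N \<Longrightarrow> t \<ge> 0 \<Longrightarrow> (x i has_vector_derivative v i t) (at t within {0..})"
    and vder: "\<And>i t. i < N \<Longrightarrow> t \<ge> 0 \<Longrightarrow> (v i has_vector_derivative F i t) (at t within {0..})"
    and nocol: "\<And>i j t. i < N \<Longrightarrow> j < N \<Longrightarrow> i \<noteq> j \<Longrightarrow> t \<ge> 0 \<Longrightarrow> x i t \<noteq> x j t"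
    using sol unfolding CS_global_smooth_solution_def F_def by auto
  have E0E: "E 0 = E0" unfolding E_def E0_def ..

  have Eder: "(E has_real_derivative D t) (at t within {0..})" if t: "t \<ge> 0" for t
  proof -
    have kin: "((\<lambda>t. (1/2) * (\<Sum>i<N. (norm (v i t))^2)) has_real_derivative
        (1/2) * (\<Sum>i<N. 2 * (v i t \<bullet> F i t))) (at t within {0..})"
      by (intro DERIV_cmult DERIV_sum sqder vder) (use t in auto)
    have pterm: "((\<lambda>t. (norm (x j t - x i t) - dinf i j)^2) has_real_derivative
        2 * (norm (x j t - x i t) - dinf i j) * ((v j t - v i t) \<bullet> unitdir (x i t) (x j t))) (at t within {0..})"
      if ij: "i < N" "j < N" for i j
    proof (cases "i = j")
      case True
      have "((\<lambda>t. (norm (x j t - x i t) - dinf i j)^2) has_real_derivative 0) (at t within {0..})"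
        using True by simp
      then show ?thesis using True by simp
    next
      case False
      have d: "((\<lambda>t. x j t - x i t) has_vector_derivative (v j t - v i t)) (at t within {0..})"
        by (intro has_vector_derivative_diff xder) (use ij t in auto)
      have nz: "x j t - x i t \<noteq> 0" using nocol[of j i t] ij t False by auto
      have r: "((\<lambda>t. norm (x j t - x i t)) has_real_derivative ((v j t - v i t) \<bullet> unitdir (x i t) (x j t))) (at t within {0..})"
        using normder[OF d nz] by (simp add: unitdir_sgn)
      show ?thesis
        by (rule derivative_eq_intros r | simp)+
    qed
    have pot: "((\<lambda>t. (k2 / (4 * real N)) * (\<Sum>i<N. \<Sum>j<N. (norm (x j t - x i t) - dinf i j)^2)) has_real_derivative
        (k2 / (4 * real N)) * (\<Sum>i<N. \<Sum>j<N. 2 * (norm (x j t - x i t) - dinf i j) * ((v j t - v i t) \<bullet> unitdir (x i t) (x j t)))) (at t within {0..})"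
      by (intro DERIV_cmult DERIV_sum pterm) auto
    have "(E has_real_derivative ((1/2) * (\<Sum>i<N. 2 * (v i t \<bullet> F i t)) +
        (k2 / (4 * real N)) * (\<Sum>i<N. \<Sum>j<N. 2 * (norm (x j t - x i t) - dinf i j) * ((v j t - v i t) \<bullet> unitdir (x i t) (x j t))))) (at t within {0..})"
      unfolding E_def CS_energy_def by (rule DERIV_add[OF kin pot])
    moreover have "(1/2) * (\<Sum>i<N. 2 * (v i t \<bullet> F i t)) +
        (k2 / (4 * real N)) * (\<Sum>i<N. \<Sum>j<N. 2 * (norm (x j t - x i t) - dinf i j) * ((v j t - v i t) \<bullet> unitdir (x i t) (x j t))) = D t"
    proof -
      have "(1/2) * (\<Sum>i<N. 2 * (v i t \<bullet> F i t)) = (\<Sum>i<N. v i t \<bullet> F i t)"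
        by (simp add: sum_distrib_left)
      then show ?thesis unfolding D_def F_def
        using energy_deriv_formula[OF dsym Npos, of "\<lambda>j. v j t" k0 k1 k2 \<psi> "\<lambda>j. x j t"] 
        by (simp add: F_def)
    qed
    ultimately show ?thesis by simp
  qed
  have Dle0: "D t \<le> 0" if "t \<ge> 0" for t
  proof -
    have "0 \<le> (\<Sum>i<N. \<Sum>j<N. k0 * \<psi> (norm (x j t - x i t)) * (norm (v j t - v i t))^2
          + k1 * ((v j t - v i t) \<bullet> unitdir (x i t) (x j t))^2)"
      by (intro sum_nonneg) (use psi_bnd k0 k1 in \<open>auto intro!: add_nonneg_nonneg mult_nonneg_nonneg\<close>)
    then show ?thesis unfolding D_def by (intro mult_nonpos_nonneg) (use rNpos in auto)
  qed
  have Emono: "E b \<le> E a" if "0 \<le> a" "a \<le> b" for a b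
    by (rule mono_within[OF that, of E D]) (use Eder Dle0 that in auto)
  have Ele: "E t \<le> E0" if "t \<ge> 0" for t using Emono[of 0 t] that E0E by simp
  define P where "P t i j = (norm (x j t - x i t) - dinf i j)^2" for t i j
  have Eexp: "E t = (1/2) * (\<Sum>i<N. (norm (v i t))^2) + (k2/(4*real N)) * (\<Sum>i<N. \<Sum>j<N. P t i j)" for t
    unfolding E_def CS_energy_def P_def ..
  have Pnn: "0 \<le> P t i j" for t i j unfolding P_def by simp
  have potnn: "0 \<le> (k2/(4*real N)) * (\<Sum>i<N. \<Sum>j<N. P t i j)" for t
    using k2 rNpos Pnn by (intro mult_nonneg_nonneg sum_nonneg) auto
  have kinnn: "0 \<le> (1/2) * (\<Sum>i<N. (norm (v i t))^2)" for t
    by (intro mult_nonneg_nonneg sum_nonneg) auto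
  have Enn: "0 \<le> E t" for t using Eexp[of t] potnn[of t] kinnn[of t] by linarith
  have vsq: "(norm (v i t))^2 \<le> 2 * E0" if "t \<ge> 0" "i < N" for i t
  proof -
    have "(norm (v i t))^2 \<le> (\<Sum>i<N. (norm (v i t))^2)" by (rule member_le_sum) (use that in auto)
    then show ?thesis using Ele[OF that(1)] Eexp[of t] potnn[of t] by linarith
  qed
  have Psum: "(k2/(4*real N)) * (\<Sum>i<N. \<Sum>j<N. P t i j) \<le> E0" if "t\<ge>0" for t
    using Ele[OF that] Eexp[of t] kinnn[of t] by linarith
  have Pdiv: "S \<le> 4 * real N * E0 / k2" if "(k2/(4*real N)) * S \<le> E0" for S
  proof -
    have "k2 * S \<le> 4 * real N * E0" using that rNpos by (simp add: field_simps)
    then show ?thesis using k2 by (simp add: field_simps)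
  qed
  have Pbnd1: "P t i j \<le> 4 * real N * E0 / k2" if "t \<ge> 0" "i<N" "j<N" for t i j
  proof -
    have "P t i j \<le> (\<Sum>i<N. \<Sum>j<N. P t i j)" by (rule dsum_single) (use that Pnn in auto)
    then have "(k2/(4*real N)) * P t i j \<le> E0"
      using Psum[OF that(1)] k2 rNpos by (meson divide_nonneg_pos less_eq_real_def mult_left_mono order_trans zero_le_mult_iff mult_pos_pos zero_less_numeral)
    then show ?thesis by (rule Pdiv)
  qed
  have Pbnd2: "2 * P t i j \<le> 4 * real N * E0 / k2" if "t \<ge> 0" "i<N" "j<N" "i \<noteq> j" for t i j
  proof -
    have sy: "P t j i = P t i j" unfolding P_def using dsym that by (simp add: norm_minus_commute)
    have "P t i j + P t j i \<le> (\<Sum>i<N. \<Sum>j<N. P t i j)" by (rule dsum_pair) (use that Pnn in auto)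
    then have "(k2/(4*real N)) * (2 * P t i j) \<le> E0"
      using Psum[OF that(1)] k2 rNpos sy
      by (smt (verit, ccfv_SIG) divide_nonneg_pos mult_left_mono)
    then show ?thesis by (rule Pdiv)
  qed
  define Q where "Q = sqrt (2 * real N * E0 / k2)"
  have Q0: "0 \<le> Q" unfolding Q_def using Enn[of 0] E0E k2 by simp
  have rdiff: "\<bar>norm (x j t - x i t) - dinf i j\<bar> \<le> Q" if "t \<ge> 0" "i<N" "j<N" "i \<noteq> j" for t i j
  proof -
    have "(norm (x j t - x i t) - dinf i j)^2 \<le> 2 * real N * E0 / k2"
      using Pbnd2[OF that] unfolding P_def by simp
    then show ?thesis unfolding Q_def using real_le_rsqrt by (metis real_sqrt_abs real_sqrt_le_mono)
  qed
  define Rb where "Rb = sqrt (4 * real N * E0 / k2)"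
  have Rb0: "0 \<le> Rb" unfolding Rb_def using Enn[of 0] E0E k2 by simp
  have rdiff1: "\<bar>norm (x j t - x i t) - dinf i j\<bar> \<le> Rb" if "t \<ge> 0" "i<N" "j<N" for t i j
  proof -
    have "(norm (x j t - x i t) - dinf i j)^2 \<le> 4 * real N * E0 / k2"
      using Pbnd1[OF that] unfolding P_def by simp
    then show ?thesis unfolding Rb_def by (metis real_sqrt_abs real_sqrt_le_mono)
  qed
  define Dset where "Dset = {dinf i j | i j. i < N \<and> j < N \<and> i \<noteq> j}"
  have Dfin: "finite Dset" unfolding Dset_def by (rule finite_pairs)
  have d01: "dinf 0 1 \<in> Dset" unfolding Dset_def using N2 by force
  have Ueq: "U = Max Dset + Q" unfolding U_def Dset_def Q_def ..
  have U0: "0 \<le> U"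
  proof -
    have "Min Dset \<le> dinf 0 1" by (rule Min_le[OF Dfin d01])
    moreover have "dinf 0 1 \<le> Max Dset" by (rule Max_ge[OF Dfin d01])
    moreover have "Min Dset > Q" using d_large unfolding Dset_def Q_def .
    ultimately show ?thesis unfolding Ueq using Q0 by linarith
  qed
  have rU: "norm (x j t - x i t) \<le> U" if "t \<ge> 0" "i<N" "j<N" for t i j
  proof (cases "i = j")
    case True then show ?thesis using U0 by simp
  next
    case False
    have "dinf i j \<in> Dset" unfolding Dset_def using that False by blast
    then have "dinf i j \<le> Max Dset" by (rule Max_ge[OF Dfin])
    then show ?thesis using rdiff[OF that False] unfolding Ueq by linarith
  qed
  have part1: "\<exists>B. \<forall>t\<ge>0. Max {norm (x i t - x j t) | i j. i < N \<and> j < N} \<le> B"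
  proof (intro exI allI impI)
    fix t :: real assume t: "t \<ge> 0"
    have ne: "{norm (x i t - x j t) | i j. i < N \<and> j < N} \<noteq> {}" using Npos by blast
    show "Max {norm (x i t - x j t) | i j. i < N \<and> j < N} \<le> U"
      using rU[OF t] by (subst Max_le_iff[OF finite_pairs2 ne]) blast
  qed
  define pm where "pm = Inf (\<psi> ` {0..U})"
  have pm0: "pm > 0" unfolding pm_def using psi_min .
  have psi_ge: "pm \<le> \<psi> (norm (x j t - x i t))" if "t \<ge> 0" "i<N" "j<N" for t i j
  proof -
    have "bdd_below (\<psi> ` {0..U})"
    proof (rule bdd_belowI[of _ 0])
      fix y assume "y \<in> \<psi> ` {0..U}"
      then obtain r where "r \<in> {0..U}" "y = \<psi> r" by blast
      then show "0 \<le> y" using psi_bnd by simp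
    qed
    moreover have "\<psi> (norm (x j t - x i t)) \<in> \<psi> ` {0..U}" using rU[OF that] by auto
    ultimately show ?thesis unfolding pm_def by (rule cInf_lower[rotated])
  qed
  have Dbound: "D t \<le> -(k0*pm/(2*real N)) * (norm (v j t - v i t))^2" if "t \<ge> 0" "i<N" "j<N" for t i j
  proof -
    define T where "T a b = k0 * \<psi> (norm (x b t - x a t)) * (norm (v b t - v a t))^2
          + k1 * ((v b t - v a t) \<bullet> unitdir (x a t) (x b t))^2" for a b
    have Tnn: "0 \<le> T a b" if "a < N" "b < N" for a b
      unfolding T_def using psi_bnd k0 k1 by (auto intro!: add_nonneg_nonneg mult_nonneg_nonneg)
    have "k0 * pm * (norm (v j t - v i t))^2 \<le> k0 * \<psi> (norm (x j t - x i t)) * (norm (v j t - v i t))^2"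
      using psi_ge[OF that] k0 by (intro mult_right_mono mult_left_mono) auto
    also have "\<dots> \<le> T i j" unfolding T_def using k1 by simp
    also have "\<dots> \<le> (\<Sum>a<N. \<Sum>b<N. T a b)" by (rule dsum_single) (use Tnn that in auto)
    finally have h: "k0 * pm * (norm (v j t - v i t))^2 \<le> (\<Sum>a<N. \<Sum>b<N. T a b)" .
    have "D t = - ((\<Sum>a<N. \<Sum>b<N. T a b) / (2 * real N))" unfolding D_def T_def by simp
    also have "\<dots> \<le> - ((k0 * pm * (norm (v j t - v i t))^2) / (2 * real N))"
      using h rNpos by (intro le_imp_neg_le divide_right_mono) auto
    finally show ?thesis by simp
  qed
  define Vb where "Vb = sqrt (2 * E0)"
  have Vb0: "0 \<le> Vb" unfolding Vb_def using Enn[of 0] E0E by simp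
  have vnorm: "norm (v i t) \<le> Vb" if "t \<ge> 0" "i < N" for t i
    unfolding Vb_def using vsq[OF that] real_le_rsqrt by blast
  have psiM0: "0 \<le> \<psi>M" using psi_bnd by force
  define Fb where "Fb = real N * ((k0 / real N) * (\<psi>M * (2 * Vb)) + (k1 / real N) * (2 * Vb) + (k2 / real N) * Rb)"
  have Fb0: "0 \<le> Fb" unfolding Fb_def using k0 k1 k2 psiM0 Vb0 Rb0
    by (intro mult_nonneg_nonneg add_nonneg_nonneg) auto
  have Fbound: "norm (F i t) \<le> Fb" if "t \<ge> 0" "i < N" for t i
  proof -
    have eq: "F i t = (\<Sum>j<N. Wf N k0 k1 k2 \<psi> dinf (\<lambda>j. x j t) (\<lambda>j. v j t) i j)"
      unfolding F_def using that(2) by (rule force_eq)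
    have "norm (\<Sum>j<N. Wf N k0 k1 k2 \<psi> dinf (\<lambda>j. x j t) (\<lambda>j. v j t) i j) \<le> (\<Sum>j<N. (k0 / real N) * (\<psi>M * (2 * Vb)) + (k1 / real N) * (2 * Vb) + (k2 / real N) * Rb)"
      by (intro sum_norm_le Wf_bound) (use vnorm rdiff1 that psi_bnd k0 k1 k2 in auto)
    also have "\<dots> = Fb" unfolding Fb_def by (simp only: sum_constant card_lessThan)
    finally show ?thesis unfolding eq .
  qed
  have vlip: "norm (v i b - v i a) \<le> Fb * (b - a)" if "0 \<le> a" "a \<le> b" "i < N" for a b i
    by (rule lip_within[OF that(1,2), of "v i" "F i"]) (use vder Fbound that in auto)
  have conv: "\<exists>T\<ge>0. \<forall>t\<ge>T. \<forall>i<N. \<forall>j<N. norm (v j t - v i t) < \<epsilon>" if eps: "\<epsilon> > 0" for \<epsilon>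
  proof -
    define c where "c = k0*pm/(2*real N)"
    have c0: "c > 0" unfolding c_def using k0 pm0 rNpos by simp
    define \<delta> where "\<delta> = \<epsilon> / (4*Fb+1)"
    have d0: "\<delta> > 0" unfolding \<delta>_def using eps Fb0 by simp
    have d2: "2 * Fb * \<delta> \<le> \<epsilon> / 2"
    proof -
      have "2 * Fb * \<delta> = (2 * Fb * \<epsilon>) / (4*Fb+1)" unfolding \<delta>_def by simp
      also have "\<dots> \<le> \<epsilon> / 2" using Fb0 eps by (simp add: field_simps)
      finally show ?thesis .
    qed
    define \<eta> where "\<eta> = c*(\<epsilon>/2)^2*\<delta>"
    have e0: "\<eta> > 0" unfolding \<eta>_def using c0 d0 eps by simp
    define L where "L = Inf (E ` {0..})"
    have bdd: "bdd_below (E ` {0..})" by (rule bdd_belowI[of _ 0]) (use Enn in auto)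
    have "Inf (E ` {0..}) < L + \<eta>" unfolding L_def using e0 by simp
    then obtain T where T: "T \<in> {0..}" "E T < L + \<eta>"
      using cInf_lessD[of "E ` {0..}"] by blast
    have "\<forall>t\<ge>T. \<forall>i<N. \<forall>j<N. norm (v j t - v i t) < \<epsilon>"
    proof (intro allI impI)
      fix t i j assume tT: "t \<ge> T" and ij: "i < N" "j < N"
      have t0: "t \<ge> 0" using T tT by auto
      show "norm (v j t - v i t) < \<epsilon>"
      proof (rule ccontr)
        assume "\<not> norm (v j t - v i t) < \<epsilon>"
        then have big: "\<epsilon> \<le> norm (v j t - v i t)" by simp
        have low: "(\<epsilon>/2)^2 \<le> (norm (v j s - v i s))^2" if s: "t \<le> s" "s \<le> t + \<delta>" for s
        proof -
          have a1: "norm (v j s - v j t) \<le> Fb * (s - t)" by (rule vlip) (use s t0 ij in auto)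
          have a2: "norm (v i s - v i t) \<le> Fb * (s - t)" by (rule vlip) (use s t0 ij in auto)
          have "Fb * (s - t) \<le> Fb * \<delta>" using s Fb0 by (intro mult_left_mono) auto
          have tri: "norm (v j t - v i t) \<le> norm (v j s - v i s) + norm (v j s - v j t) + norm (v i s - v i t)"
          proof -
            have "v j t - v i t = (v j s - v i s) - (v j s - v j t) + (v i s - v i t)" by (simp add: algebra_simps)
            then have "norm (v j t - v i t) = norm ((v j s - v i s) - (v j s - v j t) + (v i s - v i t))" by simp
            also have "\<dots> \<le> norm ((v j s - v i s) - (v j s - v j t)) + norm (v i s - v i t)" by (rule norm_triangle_ineq)
            also have "\<dots> \<le> norm (v j s - v i s) + norm (v j s - v j t) + norm (v i s - v i t)"
              using norm_triangle_ineq4[of "v j s - v i s" "v j s - v j t"] by linarith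
            finally show ?thesis .
          qed
          have "\<epsilon>/2 \<le> norm (v j s - v i s)"
            using tri a1 a2 big d2 \<open>Fb * (s - t) \<le> Fb * \<delta>\<close> by linarith
          then show ?thesis using eps by (intro power_mono) auto
        qed
        define g where "g s = E s + c*(\<epsilon>/2)^2 * s" for s
        have "g (t + \<delta>) \<le> g t"
        proof (rule mono_within[of t "t + \<delta>" g "\<lambda>s. D s + c*(\<epsilon>/2)^2"])
          fix s assume s: "t \<le> s" "s \<le> t + \<delta>"
          have s0: "s \<ge> 0" using s t0 by simp
          have "(g has_real_derivative D s + c*(\<epsilon>/2)^2 * 1) (at s within {0..})"
            unfolding g_def by (intro DERIV_add Eder[OF s0] DERIV_cmult DERIV_ident)
          moreover have "D s + c*(\<epsilon>/2)^2 \<le> 0"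
          proof -
            have "D s \<le> - c * (norm (v j s - v i s))^2" using Dbound[OF s0 ij] unfolding c_def by simp
            also have "\<dots> \<le> - c * (\<epsilon>/2)^2" using low[OF s] c0 by simp
            finally show ?thesis by simp
          qed
          ultimately show "(g has_real_derivative D s + c*(\<epsilon>/2)^2) (at s within {0..}) \<and> D s + c*(\<epsilon>/2)^2 \<le> 0"
            by simp
        qed (use t0 d0 in auto)
        then have "E (t + \<delta>) \<le> E t - \<eta>" unfolding g_def \<eta>_def by (simp add: algebra_simps)
        moreover have "E t \<le> E T" using Emono[of T t] T tT by auto
        moreover have "L \<le> E (t + \<delta>)" unfolding L_def
          by (rule cInf_lower[OF _ bdd]) (use t0 d0 in auto)
        ultimately show False using T(2) by linarith
      qed
    qed
    then show ?thesis using T by auto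
  qed
  have part2: "((\<lambda>t. Max {norm (v j t - v i t) | i j. i < N \<and> j < N}) \<longlongrightarrow> 0) at_top"
  proof (rule tendsto_Max0)
    show "\<And>t. finite {norm (v j t - v i t) | i j. i < N \<and> j < N}" by (rule finite_pairs2)
    show "\<And>t. {norm (v j t - v i t) | i j. i < N \<and> j < N} \<noteq> {}" using Npos by blast
    show "\<And>t y. y \<in> {norm (v j t - v i t) | i j. i < N \<and> j < N} \<Longrightarrow> 0 \<le> y" by auto
    fix \<epsilon> :: real assume "\<epsilon> > 0"
    then obtain T where "\<forall>t\<ge>T. \<forall>i<N. \<forall>j<N. norm (v j t - v i t) < \<epsilon>" using conv by blast
    then show "\<exists>T. \<forall>t\<ge>T. \<forall>y\<in>{norm (v j t - v i t) | i j. i < N \<and> j < N}. y < \<epsilon>" by blast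
  qed
  have part3: "((\<lambda>t. Max {norm (v i t) | i. i < N}) \<longlongrightarrow> 0) at_top" if sum0: "(\<Sum>i<N. v i 0) = 0"
  proof -
    have sumt: "(\<Sum>i<N. v i t) = 0" if t: "t \<ge> 0" for t
    proof -
      have "((\<lambda>t. \<Sum>i<N. v i t) has_vector_derivative 0) (at s within {0..})" if "s \<in> {0..}" for s
      proof -
        have "((\<lambda>t. \<Sum>i<N. v i t) has_vector_derivative (\<Sum>i<N. F i s)) (at s within {0..})"
          by (intro has_vector_derivative_sum vder) (use that in auto)
        moreover have "(\<Sum>i<N. F i s) = 0" unfolding F_def by (rule antisym_force_sum[OF dsym])
        ultimately show ?thesis by simp
      qed
      then obtain C where "\<And>s. s \<in> {0..} \<Longrightarrow> (\<Sum>i<N. v i s) = C"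
        using has_vector_derivative_zero_constant[of "{0::real..}" "\<lambda>t. \<Sum>i<N. v i t"] by auto
      then have "(\<Sum>i<N. v i t) = (\<Sum>i<N. v i 0)" using t by force
      then show ?thesis using sum0 by simp
    qed
    show ?thesis
    proof (rule tendsto_Max0)
      show "\<And>t. finite {norm (v i t) | i. i < N}" by simp
      show "\<And>t. {norm (v i t) | i. i < N} \<noteq> {}" using Npos by blast
      show "\<And>t y. y \<in> {norm (v i t) | i. i < N} \<Longrightarrow> 0 \<le> y" by auto
      fix \<epsilon> :: real assume "\<epsilon> > 0"
      then obtain T where T: "T \<ge> 0" "\<forall>t\<ge>T. \<forall>i<N. \<forall>j<N. norm (v j t - v i t) < \<epsilon>" using conv by blast
      have "norm (v i t) < \<epsilon>" if "t \<ge> T" "i < N" for t i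
      proof -
        have "(\<Sum>j<N. (v i t - v j t)) = real N *\<^sub>R v i t - (\<Sum>j<N. v j t)"
          by (simp add: sum_subtractf sum_constant_scaleR)
        also have "\<dots> = real N *\<^sub>R v i t" using sumt[of t] T that by simp
        finally have eq: "(\<Sum>j<N. (v i t - v j t)) = real N *\<^sub>R v i t" .
        have "real N * norm (v i t) = norm (\<Sum>j<N. (v i t - v j t))" unfolding eq by simp
        also have "\<dots> \<le> (\<Sum>j<N. norm (v i t - v j t))" by (rule norm_sum)
        also have "\<dots> < (\<Sum>j<N. \<epsilon>)"
          by (rule sum_strict_mono) (use T that Npos in auto)
        also have "\<dots> = real N * \<epsilon>" by simp
        finally show ?thesis using rNpos by simp
      qed
      then show "\<exists>T. \<forall>t\<ge>T. \<forall>y\<in>{norm (v i t) | i. i < N}. y < \<epsilon>" by blast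
    qed
  qed
  show ?thesis using part1 part2 part3 by blast
qed

end
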